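(* Let $S_d$, $d\ge1$, be nonnegative random variables such that for some positive $\mu,q,C$, $$M_d(t):=E[e^{tS_d}]\le\frac{C}{(1-\mu t/q)^{qd}}\quad\text{for all }t\le0.$$ Then for every $m\ge1$ and $d\ge 2m/q$, $E[(d/S_d)^m]\le C_{\mu,m}$, where $C_{\mu,m}=C(2/\mu)^m$ depends only on $\mu,m$ (and $C$). Moreover, if $S_d=\sum_{i=1}^dV_i$ with $V_1,\dots,V_d$ nonnegative and negatively associated, and each $V_i$ satisfies $E[e^{tV_i}]\le(1-\mu t/q)^{-q}$ for all $t\le0$, then for every $m\ge1$ and $d\ge2m/q$, $E[(d/S_d)^m]\le(2/\mu)^m$.
   Context: Random variables $V_1,\dots,V_d$ are negatively associated if for all disjoint $A,B\subset\{1,\dots,d\}$, $\mathrm{Cov}(f(V_i,i\in A),g(V_i,i\in B))\le0$ whenever $f,g$ are both non-decreasing or both non-increasing. *)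

theory Defs
  imports "HOL-Probability.Probability"
begin

definition neg_assoc :: "'a measure \<Rightarrow> (nat \<Rightarrow> 'a \<Rightarrow> real) \<Rightarrow> nat set \<Rightarrow> bool" where
  "neg_assoc M V I \<longleftrightarrow>
     (\<forall>i\<in>I. V i \<in> borel_measurable M) \<and>
     (\<forall>A B (f :: (nat \<Rightarrow> real) \<Rightarrow> real) (g :: (nat \<Rightarrow> real) \<Rightarrow> real). A \<subseteq> I \<longrightarrow> B \<subseteq> I \<longrightarrow> A \<inter> B = {} \<longrightarrow>
        f \<in> borel_measurable (Pi\<^sub>M A (\<lambda>_. borel)) \<longrightarrow>
        g \<in> borel_measurable (Pi\<^sub>M B (\<lambda>_. borel)) \<longrightarrow>
        ((\<forall>u\<in>space (Pi\<^sub>M A (\<lambda>_. borel)). \<forall>v\<in>space (Pi\<^sub>M A (\<lambda>_. borel)). u \<le> v \<longrightarrow> f u \<le> f v) \<and>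
         (\<forall>u\<in>space (Pi\<^sub>M B (\<lambda>_. borel)). \<forall>v\<in>space (Pi\<^sub>M B (\<lambda>_. borel)). u \<le> v \<longrightarrow> g u \<le> g v) \<or>
         (\<forall>u\<in>space (Pi\<^sub>M A (\<lambda>_. borel)). \<forall>v\<in>space (Pi\<^sub>M A (\<lambda>_. borel)). u \<le> v \<longrightarrow> f v \<le> f u) \<and>
         (\<forall>u\<in>space (Pi\<^sub>M B (\<lambda>_. borel)). \<forall>v\<in>space (Pi\<^sub>M B (\<lambda>_. borel)). u \<le> v \<longrightarrow> g v \<le> g u)) \<longrightarrow>
        integrable M (\<lambda>x. f (restrict (\<lambda>i. V i x) A)) \<longrightarrow>
        integrable M (\<lambda>x. g (restrict (\<lambda>i. V i x) B)) \<longrightarrow>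
        integrable M (\<lambda>x. f (restrict (\<lambda>i. V i x) A) * g (restrict (\<lambda>i. V i x) B)) \<longrightarrow>
        (\<integral>x. f (restrict (\<lambda>i. V i x) A) * g (restrict (\<lambda>i. V i x) B) \<partial>M)
          - (\<integral>x. f (restrict (\<lambda>i. V i x) A) \<partial>M) * (\<integral>x. g (restrict (\<lambda>i. V i x) B) \<partial>M) \<le> 0)"

end

theory Submission
  imports Defs
begin

lemma gamma_scaled:
  fixes r s :: real assumes r: "r>0" and s: "s>0"
  shows "(\<integral>\<^sup>+t. ennreal (indicator {0<..} t * t powr (r-1) * exp (-(s*t))) \<partial>lborel) = ennreal (Gamma r / s powr r)"
proof -
  define f where "f = (\<lambda>t::real. ennreal (indicator {0<..} t * t powr (r-1) * exp (-t)))"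
  have fm: "f \<in> borel_measurable borel" unfolding f_def by measurable
  have "ennreal (Gamma r) = (\<integral>\<^sup>+t. f t \<partial>lborel)"
    unfolding Gamma_conv_nn_integral_real[OF r] f_def
    by (intro nn_integral_cong) (auto simp: indicator_def exp_minus field_simps)
  also have "\<dots> = ennreal \<bar>s\<bar> * (\<integral>\<^sup>+x. f (0 + s * x) \<partial>lborel)"
    using nn_integral_real_affine[OF fm, of s 0] s by simp
  also have "(\<integral>\<^sup>+x. f (0 + s * x) \<partial>lborel) = (\<integral>\<^sup>+x. ennreal (s powr (r-1)) * ennreal (indicator {0<..} x * x powr (r-1) * exp (-(s*x))) \<partial>lborel)"
    unfolding f_def using s
    by (intro nn_integral_cong) (auto simp: indicator_def powr_mult ennreal_mult'[symmetric] zero_less_mult_iff)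
  also have "\<dots> = ennreal (s powr (r-1)) * (\<integral>\<^sup>+t. ennreal (indicator {0<..} t * t powr (r-1) * exp (-(s*t))) \<partial>lborel)"
    by (rule nn_integral_cmult) measurable
  finally have eq: "ennreal (Gamma r) = ennreal (s powr r) * (\<integral>\<^sup>+t. ennreal (indicator {0<..} t * t powr (r-1) * exp (-(s*t))) \<partial>lborel)"
    using s by (simp add: mult.assoc[symmetric] ennreal_mult[symmetric] powr_mult_base)
  have "ennreal (Gamma r / s powr r) = ennreal (1 / s powr r) * ennreal (Gamma r)"
    using s Gamma_real_pos[OF r] by (simp add: ennreal_mult[symmetric])
  also have "\<dots> = (ennreal (1 / s powr r) * ennreal (s powr r)) * (\<integral>\<^sup>+t. ennreal (indicator {0<..} t * t powr (r-1) * exp (-(s*t))) \<partial>lborel)"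
    by (subst eq) (simp add: mult.assoc)
  also have "ennreal (1 / s powr r) * ennreal (s powr r) = 1"
    using s by (simp add: ennreal_mult[symmetric])
  finally show ?thesis by simp
qed

lemma pair_lborel: "pair_sigma_finite lborel lborel"
  by (simp add: pair_sigma_finite_def lborel.sigma_finite_measure_axioms)

lemma beta_type:
  fixes m n a :: real assumes m: "m>0" and nm: "n>m" and a: "a>0"
  shows "(\<integral>\<^sup>+t. ennreal (indicator {0<..} t * t powr (m-1) * (1 + a*t) powr (-n)) \<partial>lborel)
         = ennreal (Gamma m * Gamma (n-m) / (Gamma n * a powr m))"
proof -
  have n: "n > 0" using m nm by simp
  define H where "H = (\<lambda>t u::real. indicator {0<..} t * t powr (m-1) * (indicator {0<..} u * u powr (n-1) * exp (-((1+a*t)*u))))"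
  have Hm: "case_prod (\<lambda>t u. ennreal (H t u)) \<in> borel_measurable (lborel \<Otimes>\<^sub>M lborel)"
    unfolding H_def by measurable
  have s1: "ennreal (Gamma n) * ennreal (indicator {0<..} t * t powr (m-1) * (1 + a*t) powr (-n))
            = (\<integral>\<^sup>+u. ennreal (H t u) \<partial>lborel)" for t
  proof (cases "t > 0")
    case True
    have "(\<integral>\<^sup>+u. ennreal (H t u) \<partial>lborel) = (\<integral>\<^sup>+u. ennreal (t powr (m-1)) * ennreal (indicator {0<..} u * u powr (n-1) * exp (-((1+a*t)*u))) \<partial>lborel)"
      unfolding H_def using True by (intro nn_integral_cong) (simp add: ennreal_mult[symmetric])
    also have "\<dots> = ennreal (t powr (m-1)) * (\<integral>\<^sup>+u. ennreal (indicator {0<..} u * u powr (n-1) * exp (-((1+a*t)*u))) \<partial>lborel)"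
      by (rule nn_integral_cmult) measurable
    also have "\<dots> = ennreal (t powr (m-1)) * ennreal (Gamma n / (1+a*t) powr n)"
      using gamma_scaled[OF n, of "1+a*t"] True a by (simp add: add_pos_pos)
    also have "\<dots> = ennreal (Gamma n) * ennreal (indicator {0<..} t * t powr (m-1) * (1 + a*t) powr (-n))"
      using True a Gamma_real_pos[OF n]
      by (simp add: ennreal_mult[symmetric] powr_minus_divide mult_ac)
    finally show ?thesis by simp
  next
    case False
    then show ?thesis unfolding H_def by simp
  qed
  have "ennreal (Gamma n) * (\<integral>\<^sup>+t. ennreal (indicator {0<..} t * t powr (m-1) * (1 + a*t) powr (-n)) \<partial>lborel)
        = (\<integral>\<^sup>+t. ennreal (Gamma n) * ennreal (indicator {0<..} t * t powr (m-1) * (1 + a*t) powr (-n)) \<partial>lborel)"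
    by (rule nn_integral_cmult[symmetric]) measurable
  also have "\<dots> = (\<integral>\<^sup>+t. \<integral>\<^sup>+u. ennreal (H t u) \<partial>lborel \<partial>lborel)"
    by (simp add: s1)
  also have "\<dots> = (\<integral>\<^sup>+u. \<integral>\<^sup>+t. ennreal (H t u) \<partial>lborel \<partial>lborel)"
    by (rule pair_sigma_finite.Fubini'[OF pair_lborel Hm, symmetric])
  also have "\<dots> = (\<integral>\<^sup>+u. ennreal (Gamma m / a powr m) * ennreal (indicator {0<..} u * u powr ((n-m)-1) * exp (-(1*u))) \<partial>lborel)"
  proof (intro nn_integral_cong)
    fix u :: real
    show "(\<integral>\<^sup>+t. ennreal (H t u) \<partial>lborel) = ennreal (Gamma m / a powr m) * ennreal (indicator {0<..} u * u powr ((n-m)-1) * exp (-(1*u)))"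
    proof (cases "u > 0")
      case True
      have "(\<integral>\<^sup>+t. ennreal (H t u) \<partial>lborel) = (\<integral>\<^sup>+t. ennreal (u powr (n-1) * exp (-u)) * ennreal (indicator {0<..} t * t powr (m-1) * exp (-((a*u)*t))) \<partial>lborel)"
      proof (intro nn_integral_cong)
        fix t :: real
        have e: "exp (-((1+a*t)*u)) = exp (-u) * exp (-((a*u)*t))"
          by (simp add: exp_add[symmetric] algebra_simps)
        show "ennreal (H t u) = ennreal (u powr (n-1) * exp (-u)) * ennreal (indicator {0<..} t * t powr (m-1) * exp (-((a*u)*t)))"
          unfolding H_def e using True by (simp add: ennreal_mult[symmetric] mult_ac)
      qed
      also have "\<dots> = ennreal (u powr (n-1) * exp (-u)) * (\<integral>\<^sup>+t. ennreal (indicator {0<..} t * t powr (m-1) * exp (-((a*u)*t))) \<partial>lborel)"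
        by (rule nn_integral_cmult) measurable
      also have "\<dots> = ennreal (u powr (n-1) * exp (-u)) * ennreal (Gamma m / (a*u) powr m)"
        using gamma_scaled[OF m, of "a*u"] True a by simp
      also have "\<dots> = ennreal (u powr (n-1) * exp (-u) * (Gamma m / (a*u) powr m))"
        using True a Gamma_real_pos[OF m] by (simp add: ennreal_mult[symmetric])
      also have "u powr (n-1) * exp (-u) * (Gamma m / (a*u) powr m) = Gamma m / a powr m * (u powr ((n-m)-1) * exp (-(1*u)))"
      proof -
        have "u powr ((n-m)-1) = u powr (n-1) / u powr m"
          using True by (simp add: powr_diff[symmetric] algebra_simps)
        then show ?thesis using True a by (simp add: powr_mult field_simps)
      qed
      finally show ?thesis using True a Gamma_real_pos[OF m] by (simp add: ennreal_mult[symmetric])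
    next
      case False
      then show ?thesis unfolding H_def by simp
    qed
  qed
  also have "\<dots> = ennreal (Gamma m / a powr m) * (\<integral>\<^sup>+u. ennreal (indicator {0<..} u * u powr ((n-m)-1) * exp (-(1*u))) \<partial>lborel)"
    by (rule nn_integral_cmult) measurable
  also have "\<dots> = ennreal (Gamma m / a powr m) * ennreal (Gamma (n-m))"
    using gamma_scaled[of "n-m" 1] nm by simp
  finally have eq: "ennreal (Gamma n) * (\<integral>\<^sup>+t. ennreal (indicator {0<..} t * t powr (m-1) * (1 + a*t) powr (-n)) \<partial>lborel)
       = ennreal (Gamma m / a powr m) * ennreal (Gamma (n-m))" .
  have gp: "Gamma n > 0" "Gamma m > 0" "Gamma (n-m) > 0" using Gamma_real_pos n m nm by auto
  have "ennreal (Gamma m * Gamma (n-m) / (Gamma n * a powr m)) = ennreal (1 / Gamma n) * (ennreal (Gamma m / a powr m) * ennreal (Gamma (n-m)))"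
    using gp a by (simp add: ennreal_mult[symmetric])
  also note eq[symmetric]
  also have "ennreal (1 / Gamma n) * (ennreal (Gamma n) * (\<integral>\<^sup>+t. ennreal (indicator {0<..} t * t powr (m-1) * (1 + a*t) powr (-n)) \<partial>lborel))
     = (ennreal (1 / Gamma n) * ennreal (Gamma n)) * (\<integral>\<^sup>+t. ennreal (indicator {0<..} t * t powr (m-1) * (1 + a*t) powr (-n)) \<partial>lborel)"
    by (simp add: mult.assoc)
  also have "ennreal (1 / Gamma n) * ennreal (Gamma n) = 1"
    using gp by (simp add: ennreal_mult[symmetric])
  finally show ?thesis by simp
qed

lemma gamma_ratio:
  fixes m n :: real assumes m: "m \<ge> 1" and n: "n \<ge> 2*m"
  shows "n powr m * Gamma (n-m) \<le> 2 powr m * Gamma n"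
proof -
  define y where "y = n - m"
  have y: "y \<ge> m" "y > 0" using m n by (auto simp: y_def)
  have ny: "n = y + m" by (simp add: y_def)
  have "(ln \<circ> Gamma) ((1 - 1/m) *\<^sub>R y + (1/m) *\<^sub>R (y+m)) \<le> (1 - 1/m) * (ln \<circ> Gamma) y + (1/m) * (ln \<circ> Gamma) (y+m)"
    by (rule convex_onD[OF log_convex_Gamma_real]) (use m y in auto)
  moreover have "(1 - 1/m) *\<^sub>R y + (1/m) *\<^sub>R (y+m) = y + 1" using m by (simp add: field_simps)
  ultimately have c: "ln (Gamma (y+1)) \<le> (1 - 1/m) * ln (Gamma y) + (1/m) * ln (Gamma (y+m))" by simp
  have gy: "Gamma y > 0" using Gamma_real_pos[OF y(2)] .
  have gn: "Gamma n > 0" by (rule Gamma_real_pos) (use y m ny in linarith)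
  have gy0: "Gamma y \<noteq> 0" "y \<noteq> 0" using gy y(2) by (metis less_irrefl)+
  have "Gamma (y+1) = y * Gamma y" using y by (intro Gamma_plus1) (auto elim!: nonpos_Ints_cases)
  hence "ln (Gamma (y+1)) = ln y + ln (Gamma y)" by (simp add: ln_mult gy0)
  with c have "m * (ln y + ln (Gamma y)) \<le> m * ((1 - 1/m) * ln (Gamma y) + (1/m) * ln (Gamma (y+m)))"
    using m by (intro mult_left_mono) auto
  also have "\<dots> = (m - 1) * ln (Gamma y) + ln (Gamma (y+m))" using m by (simp add: field_simps)
  finally have "m * ln y + ln (Gamma y) \<le> ln (Gamma n)" by (simp add: ny algebra_simps)
  hence "exp (m * ln y + ln (Gamma y)) \<le> exp (ln (Gamma n))" by simp
  hence l: "y powr m * Gamma y \<le> Gamma n"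
    using gy y gn by (simp add: exp_add powr_def mult_ac)
  have "n powr m \<le> (2*y) powr m" using y m n by (intro powr_mono2) (auto simp: y_def)
  also have "\<dots> = 2 powr m * y powr m" using y by (simp add: powr_mult)
  finally have "n powr m * Gamma y \<le> 2 powr m * y powr m * Gamma y" using gy by (intro mult_right_mono) auto
  also have "\<dots> \<le> 2 powr m * Gamma n" using l by (simp add: mult.assoc)
  finally show ?thesis by (simp add: y_def)
qed

lemma core:
  fixes M :: "'a measure" and S :: "'a \<Rightarrow> real" and \<mu> q C D m :: real
  assumes P: "prob_space M" and mu: "\<mu> > 0" and q: "q > 0" and C: "C > 0"
    and Sm: "S \<in> borel_measurable M" and Snn: "\<forall>x\<in>space M. S x \<ge> 0"
    and mgf: "\<forall>t::real. t \<le> 0 \<longrightarrow> (\<integral>x. exp (t * S x) \<partial>M) \<le> C / (1 - \<mu> * t / q) powr (q * D)"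
    and m: "m \<ge> 1" and D: "D > 0" and Dm: "D \<ge> 2 * m / q"
  shows "(\<integral>\<^sup>+x. ennreal ((D / S x) powr m) \<partial>M) \<le> ennreal (C * (2 / \<mu>) powr m)"
proof -
  interpret prob_space M by (rule P)
  define n where "n = q * D"
  define a where "a = \<mu> / q"
  have a: "a > 0" using mu q by (simp add: a_def)
  have n2: "n \<ge> 2 * m" using Dm q by (simp add: n_def field_simps)
  have m0: "m > 0" using m by simp
  have nm: "n > m" using n2 m by simp
  have gm: "Gamma m > 0" using Gamma_real_pos[OF m0] .
  define F where "F = (\<lambda>x t. ennreal (indicator {0<..} t * t powr (m-1) * exp (-(S x * t))))"
  have Fm: "case_prod F \<in> borel_measurable (M \<Otimes>\<^sub>M lborel)"
    unfolding F_def using Sm by measurable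
  have s1: "ennreal ((D / S x) powr m) \<le> ennreal (D powr m / Gamma m) * (\<integral>\<^sup>+t. F x t \<partial>lborel)"
    if x: "x \<in> space M" for x
  proof (cases "S x = 0")
    case True then show ?thesis by simp
  next
    case False
    with Snn x have sx: "S x > 0" by force
    have "(\<integral>\<^sup>+t. F x t \<partial>lborel) = ennreal (Gamma m / S x powr m)"
      unfolding F_def using gamma_scaled[OF m0 sx] by (simp add: mult.commute)
    then have "ennreal (D powr m / Gamma m) * (\<integral>\<^sup>+t. F x t \<partial>lborel) = ennreal (D powr m / Gamma m * (Gamma m / S x powr m))"
      using gm D by (simp add: ennreal_mult[symmetric])
    also have "D powr m / Gamma m * (Gamma m / S x powr m) = (D / S x) powr m"
      using gm sx D by (simp add: powr_divide)
    finally show ?thesis by simp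
  qed
  have "(\<integral>\<^sup>+x. ennreal ((D / S x) powr m) \<partial>M) \<le> (\<integral>\<^sup>+x. ennreal (D powr m / Gamma m) * (\<integral>\<^sup>+t. F x t \<partial>lborel) \<partial>M)"
    by (rule nn_integral_mono) (rule s1)
  also have "\<dots> = ennreal (D powr m / Gamma m) * (\<integral>\<^sup>+x. \<integral>\<^sup>+t. F x t \<partial>lborel \<partial>M)"
    by (rule nn_integral_cmult) (use Fm in measurable)
  also have "(\<integral>\<^sup>+x. \<integral>\<^sup>+t. F x t \<partial>lborel \<partial>M) = (\<integral>\<^sup>+t. \<integral>\<^sup>+x. F x t \<partial>M \<partial>lborel)"
  proof -
    have "pair_sigma_finite M lborel"
      by (simp add: pair_sigma_finite_def lborel.sigma_finite_measure_axioms prob_space_imp_sigma_finite[OF P])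
    from pair_sigma_finite.Fubini'[OF this Fm] show ?thesis by simp
  qed
  also have "(\<integral>\<^sup>+t. \<integral>\<^sup>+x. F x t \<partial>M \<partial>lborel) \<le> (\<integral>\<^sup>+t. ennreal C * ennreal (indicator {0<..} t * t powr (m-1) * (1 + a*t) powr (-n)) \<partial>lborel)"
  proof (rule nn_integral_mono)
    fix t :: real
    show "(\<integral>\<^sup>+x. F x t \<partial>M) \<le> ennreal C * ennreal (indicator {0<..} t * t powr (m-1) * (1 + a*t) powr (-n))"
    proof (cases "t > 0")
      case False then show ?thesis unfolding F_def by simp
    next
      case True
      have int: "integrable M (\<lambda>x. exp (-(S x * t)))"
      proof (rule integrable_const_bound[where B=1])
        show "AE x in M. norm (exp (-(S x * t))) \<le> 1"
          using Snn True by (auto intro!: AE_I2 simp: mult_nonneg_nonneg)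
      qed (use Sm in measurable)
      have "(\<integral>\<^sup>+x. F x t \<partial>M) = (\<integral>\<^sup>+x. ennreal (t powr (m-1)) * ennreal (exp (-(S x * t))) \<partial>M)"
        unfolding F_def using True by (intro nn_integral_cong) (simp add: ennreal_mult[symmetric])
      also have "\<dots> = ennreal (t powr (m-1)) * (\<integral>\<^sup>+x. ennreal (exp (-(S x * t))) \<partial>M)"
        by (rule nn_integral_cmult) (use Sm in measurable)
      also have "(\<integral>\<^sup>+x. ennreal (exp (-(S x * t))) \<partial>M) = ennreal (\<integral>x. exp (-(S x * t)) \<partial>M)"
        by (rule nn_integral_eq_integral[OF int]) auto
      also have "(\<integral>x. exp (-(S x * t)) \<partial>M) = (\<integral>x. exp ((-t) * S x) \<partial>M)"
        by (simp add: mult.commute)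
      also have "\<dots> \<le> C / (1 - \<mu> * (-t) / q) powr (q * D)"
        using mgf[rule_format, of "-t"] True by simp
      also have "\<dots> = C * (1 + a*t) powr (-n)"
        by (simp add: a_def n_def powr_minus_divide)
      finally have "(\<integral>\<^sup>+x. F x t \<partial>M) \<le> ennreal (t powr (m-1)) * ennreal (C * (1 + a*t) powr (-n))"
        by (simp add: mult_left_mono ennreal_leI)
      also have "\<dots> = ennreal C * ennreal (indicator {0<..} t * t powr (m-1) * (1 + a*t) powr (-n))"
        using True C by (simp add: ennreal_mult[symmetric] mult_ac)
      finally show ?thesis .
    qed
  qed
  also have "(\<integral>\<^sup>+t. ennreal C * ennreal (indicator {0<..} t * t powr (m-1) * (1 + a*t) powr (-n)) \<partial>lborel)
      = ennreal C * ennreal (Gamma m * Gamma (n-m) / (Gamma n * a powr m))"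
    by (subst nn_integral_cmult) (simp_all add: beta_type[OF m0 nm a])
  finally have le: "(\<integral>\<^sup>+x. ennreal ((D / S x) powr m) \<partial>M) \<le> ennreal (D powr m / Gamma m) * (ennreal C * ennreal (Gamma m * Gamma (n-m) / (Gamma n * a powr m)))"
    by (simp add: mult_left_mono)
  have gn: "Gamma n > 0" "Gamma (n-m) > 0" using Gamma_real_pos nm m0 by auto
  have "D powr m / Gamma m * (C * (Gamma m * Gamma (n-m) / (Gamma n * a powr m))) = C * (n powr m * Gamma (n-m) / Gamma n) / \<mu> powr m"
    using gm gn mu q D by (simp add: a_def n_def powr_divide powr_mult field_simps)
  also have "\<dots> \<le> C * (2 powr m) / \<mu> powr m"
    using gamma_ratio[OF m n2] gn C mu
    by (intro divide_right_mono mult_left_mono) (simp_all add: field_simps)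
  also have "\<dots> = C * (2 / \<mu>) powr m" using mu by (simp add: powr_divide)
  finally have r: "D powr m / Gamma m * (C * (Gamma m * Gamma (n-m) / (Gamma n * a powr m))) \<le> C * (2 / \<mu>) powr m" .
  have "ennreal (D powr m / Gamma m) * (ennreal C * ennreal (Gamma m * Gamma (n-m) / (Gamma n * a powr m)))
      = ennreal (D powr m / Gamma m * (C * (Gamma m * Gamma (n-m) / (Gamma n * a powr m))))"
    using gm gn C a by (simp add: ennreal_mult[symmetric])
  also have "\<dots> \<le> ennreal (C * (2 / \<mu>) powr m)" using r by (rule ennreal_leI)
  finally show ?thesis using le by simp
qed

lemma na_prod:
  fixes M :: "'a measure" and V :: "nat \<Rightarrow> 'a \<Rightarrow> real" and t :: real
  assumes P: "prob_space M" and NA: "neg_assoc M V {1..d}"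
    and Vnn: "\<forall>i\<in>{1..d}. \<forall>x\<in>space M. V i x \<ge> 0" and t: "t \<le> 0"
  shows "k \<le> d \<Longrightarrow> (\<integral>x. exp (t * (\<Sum>i=1..k. V i x)) \<partial>M) \<le> (\<Prod>i=1..k. (\<integral>x. exp (t * V i x) \<partial>M))"
proof (induction k)
  case 0
  interpret prob_space M by (rule P)
  show ?case by simp
next
  case (Suc k)
  interpret prob_space M by (rule P)
  have Vm: "V i \<in> borel_measurable M" if "i \<in> {1..d}" for i
    using NA that unfolding neg_assoc_def by blast
  have Sm: "(\<lambda>x. \<Sum>i=1..k. V i x) \<in> borel_measurable M"
    by (rule borel_measurable_sum) (use Vm Suc.prems in auto)
  have Vk: "V (Suc k) \<in> borel_measurable M" using Vm Suc.prems by simp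
  have Snn: "(\<Sum>i=1..k. V i x) \<ge> 0" if "x \<in> space M" for x
    using Vnn Suc.prems that by (intro sum_nonneg) auto
  have Vknn: "V (Suc k) x \<ge> 0" if "x \<in> space M" for x
    using Vnn Suc.prems that by auto
  define f where "f = (\<lambda>u::nat\<Rightarrow>real. exp (t * (\<Sum>i\<in>{1..k}. u i)))"
  define g where "g = (\<lambda>u::nat\<Rightarrow>real. exp (t * u (Suc k)))"
  have hf: "f (restrict (\<lambda>i. V i x) {1..k}) = exp (t * (\<Sum>i=1..k. V i x))" for x
  proof -
    have "(\<Sum>i\<in>{1..k}. restrict (\<lambda>i. V i x) {1..k} i) = (\<Sum>i=1..k. V i x)" by (rule sum.cong) auto
    then show ?thesis unfolding f_def by simp
  qed
  have hg: "g (restrict (\<lambda>i. V i x) {Suc k}) = exp (t * V (Suc k) x)" for x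
    unfolding g_def by simp
  have fm: "f \<in> borel_measurable (Pi\<^sub>M {1..k} (\<lambda>_. borel))"
  proof -
    have "(\<lambda>u::nat\<Rightarrow>real. \<Sum>i\<in>{1..k}. u i) \<in> borel_measurable (Pi\<^sub>M {1..k} (\<lambda>_. borel))"
      by (rule borel_measurable_sum) (rule measurable_component_singleton)
    then show ?thesis unfolding f_def by measurable
  qed
  have gm: "g \<in> borel_measurable (Pi\<^sub>M {Suc k} (\<lambda>_. borel))"
  proof -
    have "(\<lambda>u::nat\<Rightarrow>real. u (Suc k)) \<in> borel_measurable (Pi\<^sub>M {Suc k} (\<lambda>_. borel))"
      by (rule measurable_component_singleton) simp
    then show ?thesis unfolding g_def by measurable
  qed
  have fmono: "\<forall>u\<in>space (Pi\<^sub>M {1..k} (\<lambda>_. borel)). \<forall>v\<in>space (Pi\<^sub>M {1..k} (\<lambda>_. borel)). u \<le> v \<longrightarrow> f v \<le> f u"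
  proof (intro ballI impI)
    fix u v :: "nat \<Rightarrow> real" assume "u \<le> v"
    then have "(\<Sum>i\<in>{1..k}. u i) \<le> (\<Sum>i\<in>{1..k}. v i)" by (intro sum_mono) (simp add: le_fun_def)
    then have "t * (\<Sum>i\<in>{1..k}. v i) \<le> t * (\<Sum>i\<in>{1..k}. u i)" using t by (rule mult_left_mono_neg)
    then show "f v \<le> f u" unfolding f_def by simp
  qed
  have gmono: "\<forall>u\<in>space (Pi\<^sub>M {Suc k} (\<lambda>_. borel)). \<forall>v\<in>space (Pi\<^sub>M {Suc k} (\<lambda>_. borel)). u \<le> v \<longrightarrow> g v \<le> g u"
  proof (intro ballI impI)
    fix u v :: "nat \<Rightarrow> real" assume "u \<le> v"
    then have "u (Suc k) \<le> v (Suc k)" by (simp add: le_fun_def)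
    then have "t * v (Suc k) \<le> t * u (Suc k)" using t by (rule mult_left_mono_neg)
    then show "g v \<le> g u" unfolding g_def by simp
  qed
  have i1: "integrable M (\<lambda>x. exp (t * (\<Sum>i=1..k. V i x)))"
    by (rule integrable_const_bound[where B=1])
       (use Snn t Sm in \<open>auto intro!: AE_I2 simp: mult_nonpos_nonneg\<close>)
  have i2: "integrable M (\<lambda>x. exp (t * V (Suc k) x))"
    by (rule integrable_const_bound[where B=1])
       (use Vknn t Vk in \<open>auto intro!: AE_I2 simp: mult_nonpos_nonneg\<close>)
  have i3: "integrable M (\<lambda>x. exp (t * (\<Sum>i=1..k. V i x)) * exp (t * V (Suc k) x))"
    by (rule integrable_const_bound[where B=1])
       (use Snn Vknn t Sm Vk in \<open>auto intro!: AE_I2 simp: mult_nonpos_nonneg exp_add[symmetric] distrib_left[symmetric] add_nonneg_nonneg\<close>)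
  have cov: "(\<integral>x. exp (t * (\<Sum>i=1..k. V i x)) * exp (t * V (Suc k) x) \<partial>M)
      - (\<integral>x. exp (t * (\<Sum>i=1..k. V i x)) \<partial>M) * (\<integral>x. exp (t * V (Suc k) x) \<partial>M) \<le> 0"
  proof -
    have A: "{1..k} \<subseteq> {1..d}" "{Suc k} \<subseteq> {1..d}" "{1..k} \<inter> {Suc k} = {}" using Suc.prems by auto
    have "(\<integral>x. f (restrict (\<lambda>i. V i x) {1..k}) * g (restrict (\<lambda>i. V i x) {Suc k}) \<partial>M)
      - (\<integral>x. f (restrict (\<lambda>i. V i x) {1..k}) \<partial>M) * (\<integral>x. g (restrict (\<lambda>i. V i x) {Suc k}) \<partial>M) \<le> 0"
    proof -
      have na: "\<forall>A B (f :: (nat \<Rightarrow> real) \<Rightarrow> real) (g :: (nat \<Rightarrow> real) \<Rightarrow> real). A \<subseteq> {1..d} \<longrightarrow> B \<subseteq> {1..d} \<longrightarrow> A \<inter> B = {} \<longrightarrow>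
        f \<in> borel_measurable (Pi\<^sub>M A (\<lambda>_. borel)) \<longrightarrow>
        g \<in> borel_measurable (Pi\<^sub>M B (\<lambda>_. borel)) \<longrightarrow>
        ((\<forall>u\<in>space (Pi\<^sub>M A (\<lambda>_. borel)). \<forall>v\<in>space (Pi\<^sub>M A (\<lambda>_. borel)). u \<le> v \<longrightarrow> f u \<le> f v) \<and>
         (\<forall>u\<in>space (Pi\<^sub>M B (\<lambda>_. borel)). \<forall>v\<in>space (Pi\<^sub>M B (\<lambda>_. borel)). u \<le> v \<longrightarrow> g u \<le> g v) \<or>
         (\<forall>u\<in>space (Pi\<^sub>M A (\<lambda>_. borel)). \<forall>v\<in>space (Pi\<^sub>M A (\<lambda>_. borel)). u \<le> v \<longrightarrow> f v \<le> f u) \<and>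
         (\<forall>u\<in>space (Pi\<^sub>M B (\<lambda>_. borel)). \<forall>v\<in>space (Pi\<^sub>M B (\<lambda>_. borel)). u \<le> v \<longrightarrow> g v \<le> g u)) \<longrightarrow>
        integrable M (\<lambda>x. f (restrict (\<lambda>i. V i x) A)) \<longrightarrow>
        integrable M (\<lambda>x. g (restrict (\<lambda>i. V i x) B)) \<longrightarrow>
        integrable M (\<lambda>x. f (restrict (\<lambda>i. V i x) A) * g (restrict (\<lambda>i. V i x) B)) \<longrightarrow>
        (\<integral>x. f (restrict (\<lambda>i. V i x) A) * g (restrict (\<lambda>i. V i x) B) \<partial>M)
          - (\<integral>x. f (restrict (\<lambda>i. V i x) A) \<partial>M) * (\<integral>x. g (restrict (\<lambda>i. V i x) B) \<partial>M) \<le> 0"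
        using NA unfolding neg_assoc_def by blast
      have j1: "integrable M (\<lambda>x. f (restrict (\<lambda>i. V i x) {1..k}))" using i1 by (simp only: hf)
      have j2: "integrable M (\<lambda>x. g (restrict (\<lambda>i. V i x) {Suc k}))" using i2 by (simp only: hg)
      have j3: "integrable M (\<lambda>x. f (restrict (\<lambda>i. V i x) {1..k}) * g (restrict (\<lambda>i. V i x) {Suc k}))" using i3 by (simp only: hf hg)
      show ?thesis
        by (rule na[rule_format, of "{1..k}" "{Suc k}" f g, OF A fm gm disjI2[OF conjI[OF fmono gmono]] j1 j2 j3])
    qed
    then show ?thesis by (simp only: hf hg)
  qed
  have "(\<integral>x. exp (t * (\<Sum>i=1..Suc k. V i x)) \<partial>M) = (\<integral>x. exp (t * (\<Sum>i=1..k. V i x)) * exp (t * V (Suc k) x) \<partial>M)"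
    by (simp add: distrib_left exp_add)
  also have "\<dots> \<le> (\<integral>x. exp (t * (\<Sum>i=1..k. V i x)) \<partial>M) * (\<integral>x. exp (t * V (Suc k) x) \<partial>M)"
    using cov by simp
  also have "\<dots> \<le> (\<Prod>i=1..k. (\<integral>x. exp (t * V i x) \<partial>M)) * (\<integral>x. exp (t * V (Suc k) x) \<partial>M)"
    using Suc.IH Suc.prems by (intro mult_right_mono integral_nonneg) auto
  also have "\<dots> = (\<Prod>i=1..Suc k. (\<integral>x. exp (t * V i x) \<partial>M))" by simp
  finally show ?case .
qed

theorem mainTheorem17:
  fixes M :: "'a measure" and \<mu> q :: real
  assumes "prob_space M" and "\<mu> > 0" and "q > 0"
  shows
   "(\<forall>(S :: nat \<Rightarrow> 'a \<Rightarrow> real) (C :: real).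
       C > 0 \<longrightarrow>
       (\<forall>d\<ge>1. S d \<in> borel_measurable M \<and> (\<forall>x\<in>space M. S d x \<ge> 0)) \<longrightarrow>
       (\<forall>d\<ge>1. \<forall>t::real. t \<le> 0 \<longrightarrow>
          (\<integral>x. exp (t * S d x) \<partial>M) \<le> C / (1 - \<mu> * t / q) powr (q * real d)) \<longrightarrow>
       (\<forall>(m::real) (d::nat). m \<ge> 1 \<longrightarrow> d \<ge> 1 \<longrightarrow> real d \<ge> 2 * m / q \<longrightarrow>
          (\<integral>\<^sup>+x. ennreal ((real d / S d x) powr m) \<partial>M) \<le> ennreal (C * (2 / \<mu>) powr m)))
    \<and>
    (\<forall>(d::nat) (V :: nat \<Rightarrow> 'a \<Rightarrow> real) (m::real).
       d \<ge> 1 \<longrightarrow>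
       neg_assoc M V {1..d} \<longrightarrow>
       (\<forall>i\<in>{1..d}. \<forall>x\<in>space M. V i x \<ge> 0) \<longrightarrow>
       (\<forall>i\<in>{1..d}. \<forall>t::real. t \<le> 0 \<longrightarrow>
          (\<integral>x. exp (t * V i x) \<partial>M) \<le> 1 / (1 - \<mu> * t / q) powr q) \<longrightarrow>
       m \<ge> 1 \<longrightarrow> real d \<ge> 2 * m / q \<longrightarrow>
       (\<integral>\<^sup>+x. ennreal ((real d / (\<Sum>i=1..d. V i x)) powr m) \<partial>M) \<le> ennreal ((2 / \<mu>) powr m))"
proof (intro conjI allI impI)
  fix S :: "nat \<Rightarrow> 'a \<Rightarrow> real" and C :: real and m :: real and d :: nat
  assume C: "C > 0" and h1: "\<forall>d\<ge>1. S d \<in> borel_measurable M \<and> (\<forall>x\<in>space M. S d x \<ge> 0)"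
    and h2: "\<forall>d\<ge>1. \<forall>t::real. t \<le> 0 \<longrightarrow>
          (\<integral>x. exp (t * S d x) \<partial>M) \<le> C / (1 - \<mu> * t / q) powr (q * real d)"
    and m: "m \<ge> 1" and d: "d \<ge> 1" and dm: "real d \<ge> 2 * m / q"
  show "(\<integral>\<^sup>+x. ennreal ((real d / S d x) powr m) \<partial>M) \<le> ennreal (C * (2 / \<mu>) powr m)"
    by (rule core[OF assms(1,2,3) C]) (use h1 h2 d m dm in auto)
next
  fix d :: nat and V :: "nat \<Rightarrow> 'a \<Rightarrow> real" and m :: real
  assume d: "d \<ge> 1" and NA: "neg_assoc M V {1..d}" and Vnn: "\<forall>i\<in>{1..d}. \<forall>x\<in>space M. V i x \<ge> 0"
    and Vmgf: "\<forall>i\<in>{1..d}. \<forall>t::real. t \<le> 0 \<longrightarrow>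
          (\<integral>x. exp (t * V i x) \<partial>M) \<le> 1 / (1 - \<mu> * t / q) powr q"
    and m: "m \<ge> 1" and dm: "real d \<ge> 2 * m / q"
  interpret prob_space M by (rule assms(1))
  have Vm: "V i \<in> borel_measurable M" if "i \<in> {1..d}" for i
    using NA that unfolding neg_assoc_def by blast
  have Sm: "(\<lambda>x. \<Sum>i=1..d. V i x) \<in> borel_measurable M"
    by (rule borel_measurable_sum) (use Vm in auto)
  have Snn: "\<forall>x\<in>space M. (\<Sum>i=1..d. V i x) \<ge> 0"
    using Vnn by (auto intro!: sum_nonneg)
  have mgf: "\<forall>t::real. t \<le> 0 \<longrightarrow> (\<integral>x. exp (t * (\<Sum>i=1..d. V i x)) \<partial>M) \<le> 1 / (1 - \<mu> * t / q) powr (q * real d)"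
  proof (intro allI impI)
    fix t :: real assume t: "t \<le> 0"
    define b where "b = 1 - \<mu> * t / q"
    have "\<mu> * t \<le> 0" using assms(2) t by (simp add: mult_nonneg_nonpos)
    hence b: "b > 0" using assms(3) by (simp add: b_def)
    have "(\<integral>x. exp (t * (\<Sum>i=1..d. V i x)) \<partial>M) \<le> (\<Prod>i=1..d. (\<integral>x. exp (t * V i x) \<partial>M))"
      by (rule na_prod[OF assms(1) NA Vnn t]) simp
    also have "\<dots> \<le> (\<Prod>i=1..d. 1 / b powr q)"
      using Vmgf t by (intro prod_mono) (auto simp: b_def)
    also have "\<dots> = 1 / b powr (q * real d)"
      using b by (simp add: power_one_over powr_realpow[symmetric] powr_powr)
    finally show "(\<integral>x. exp (t * (\<Sum>i=1..d. V i x)) \<partial>M) \<le> 1 / (1 - \<mu> * t / q) powr (q * real d)"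
      by (simp add: b_def)
  qed
  have "(\<integral>\<^sup>+x. ennreal ((real d / (\<Sum>i=1..d. V i x)) powr m) \<partial>M) \<le> ennreal (1 * (2 / \<mu>) powr m)"
    by (rule core[OF assms(1,2,3) _ Sm Snn mgf m _ dm]) (use d in auto)
  then show "(\<integral>\<^sup>+x. ennreal ((real d / (\<Sum>i=1..d. V i x)) powr m) \<partial>M) \<le> ennreal ((2 / \<mu>) powr m)"
    by simp
qed

end
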